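(* For every integer $r\ge0$, $$B_{r+1}=\sum_{k=0}^r(-1)^k\binom rk\frac{B_{r-k}B_{k+1}}{k+1}.$$
   Context: Bernoulli numbers $B_n$ are defined by $\frac{t}{e^t-1}=\sum_{n\ge0}B_nt^n/n!$ (so $B_0=1$, $B_1=-\tfrac12$). *)

theory Defs
  imports "HOL-Computational_Algebra.Formal_Power_Series"
begin

definition bernoulli :: "nat \<Rightarrow> real" where
  "bernoulli n = fact n * fps_nth (fps_X / (fps_exp 1 - 1)) n"

end

theory Submission
  imports Defs
begin

unbundle fps_syntax

definition tw :: "real fps \<Rightarrow> real fps" where
  "tw f = Abs_fps (\<lambda>k. (-1)^k * f $ k)"

lemma tw_nth[simp]: "tw f $ k = (-1)^k * f $ k"
  by (simp add: tw_def)

lemma tw_mult: "tw (f * g) = tw f * tw g"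
proof (rule fps_ext)
  fix n
  have "tw (f*g) $ n = (\<Sum>i=0..n. (-1)^n * (f$i * g$(n-i)))"
    by (simp add: fps_mult_nth sum_distrib_left)
  also have "\<dots> = (\<Sum>i=0..n. ((-1)^i * f$i) * ((-1)^(n-i) * g$(n-i)))"
  proof (rule sum.cong)
    fix i assume "i \<in> {0..n}"
    then have "(-1::real)^n = (-1)^i * (-1)^(n-i)"
      by (simp flip: power_add)
    then show "(-1)^n * (f$i * g$(n-i)) = ((-1)^i * f$i) * ((-1)^(n-i) * g$(n-i))"
      by simp
  qed simp
  finally show "tw (f*g) $ n = (tw f * tw g) $ n" by (simp add: fps_mult_nth)
qed

lemma tw_X: "tw fps_X = - fps_X"
  by (rule fps_ext) (simp add: fps_X_def)

lemma tw_exp: "tw (fps_exp 1) = fps_exp (-1)"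
  by (rule fps_ext) (simp add: power_minus')

lemma tw_one: "tw 1 = 1"
  by (rule fps_ext) simp

lemma tw_diff: "tw (f - g) = tw f - tw g"
  by (rule fps_ext) (simp add: algebra_simps)

theorem mainTheorem18:
  fixes r :: nat
  shows "bernoulli (r + 1) =
    (\<Sum>k=0..r. (-1) ^ k * of_nat (r choose k) *
        (bernoulli (r - k) * bernoulli (k + 1) / of_nat (k + 1)))"
proof -
  define E :: "real fps" where "E = fps_exp 1 - 1"
  define B where "B = fps_X / E"
  define X :: "real fps" where "X = fps_X"
  define P :: "real fps" where "P = fps_exp 1"
  have E0: "E \<noteq> 0"
  proof
    assume "E = 0" then have "E $ 1 = 0" by simp
    then show False by (simp add: E_def)
  qed
  have sdE: "subdegree E = 1"
    by (rule subdegreeI) (auto simp: E_def)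
  have "E dvd fps_X"
    using fps_dvd_iff[OF E0] sdE by simp
  then have BE: "B * E = X" unfolding B_def X_def by simp
  have PE: "P = E + 1" by (simp add: E_def P_def)
  have derP: "fps_deriv P = P" by (simp add: P_def)
  have D: "fps_deriv B * E + B * P = 1"
  proof -
    have "fps_deriv (B * E) = 1" using BE by (simp add: X_def)
    moreover have "fps_deriv E = P" by (simp add: E_def P_def)
    ultimately show ?thesis by (simp add: algebra_simps)
  qed
  have expinv: "fps_exp (-1) * P = (1::real fps)"
    by (simp add: P_def flip: fps_exp_add_mult)
  have TE: "tw E = fps_exp (-1) - 1"
    by (simp add: E_def tw_diff tw_exp tw_one)
  have TBE: "tw B * tw E = - X"
    using BE by (simp add: X_def tw_X flip: tw_mult)
  have TE0: "tw E \<noteq> 0"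
  proof
    assume "tw E = 0" then have "tw E $ 1 = 0" by simp
    then show False by (simp add: E_def)
  qed
  have P0: "P \<noteq> 0"
  proof
    assume "P = 0" then have "P $ 0 = 0" by simp
    then show False by (simp add: P_def)
  qed
  have "(B + X) * tw E * P = (- X) * P"
  proof -
    have "(B + X) * tw E * P = (B + X) * (fps_exp (-1) * P - P)"
      by (simp add: TE algebra_simps)
    also have "\<dots> = (B + X) * (1 - P)" by (simp add: expinv)
    also have "\<dots> = - B * E - X * E" by (simp add: PE algebra_simps)
    also have "\<dots> = (- X) * P" by (simp add: BE PE algebra_simps)
    finally show ?thesis .
  qed
  then have "(B + X) * tw E = - X"
    using P0 by (metis mult_right_cancel mult_minus_left)
  then have "(B + X) * tw E = tw B * tw E"
    using TBE by simp
  then have TB: "tw B = B + X" using TE0 by simp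
  define F where "F = Abs_fps (\<lambda>k. (-1)^k * B $ (k+1))"
  have B00: "B $ 0 = 1"
  proof -
    have "(B * E) $ 1 = 1" using BE by (simp add: X_def)
    then show ?thesis by (simp add: fps_mult_nth E_def)
  qed
  have XF: "X * F = 1 - tw B"
  proof (rule fps_ext)
    fix n show "(X * F) $ n = (1 - tw B) $ n"
      by (cases n) (simp_all add: X_def F_def B00)
  qed
  have key: "X * (fps_deriv B * E) = X * (B * F * E)"
  proof -
    have "X * (fps_deriv B * E) = X - X * B * P"
    proof -
      have "X * (fps_deriv B * E + B * P) = X" using D by simp
      then show ?thesis by (simp add: algebra_simps)
    qed
    also have "\<dots> = B * (X * F) * E"
    proof -
      have A0: "B * (X * F) * E = B * E - B * (B * E) - X * (B * E)"
        by (simp only: XF TB) (simp add: algebra_simps)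
      have A: "B * (X * F) * E = X - B * X - X * X" unfolding A0 BE ..
      have C0: "X - X * B * P = X - X * (B * E) - X * B" by (simp add: PE algebra_simps)
      have C: "X - X * B * P = X - X * X - X * B" unfolding C0 BE ..
      show ?thesis unfolding A C by (simp add: algebra_simps)
    qed
    finally show ?thesis by (simp add: algebra_simps)
  qed
  have X0: "X \<noteq> 0" by (simp add: X_def)
  have DBF: "fps_deriv B = B * F"
    using key X0 E0 by simp
  have bern: "bernoulli n = fact n * B $ n" for n
    by (simp add: bernoulli_def B_def E_def)
  have "bernoulli (r+1) = fact r * fps_deriv B $ r"
    by (simp add: bern algebra_simps)
  also have "\<dots> = fact r * (\<Sum>k=0..r. B $ (r-k) * ((-1)^k * B $ (k+1)))"
  proof -
    have "fps_deriv B $ r = (F * B) $ r" by (simp add: DBF mult.commute)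
    also have "\<dots> = (\<Sum>k=0..r. B $ (r-k) * ((-1)^k * B $ (k+1)))"
      unfolding fps_mult_nth F_def fps_nth_Abs_fps by (simp add: mult.commute)
    finally show ?thesis by simp
  qed
  also have "\<dots> = (\<Sum>k=0..r. (-1) ^ k * of_nat (r choose k) *
        (bernoulli (r - k) * bernoulli (k + 1) / of_nat (k + 1)))"
    unfolding sum_distrib_left
  proof (rule sum.cong)
    fix k assume k: "k \<in> {0..r}"
    then have ch: "real (r choose k) * fact (r-k) * fact k = fact r"
    proof -
      have "fact k * fact (r - k) * (r choose k) = (fact r :: nat)"
        using k by (simp add: binomial_fact_lemma)
      then have "real (fact k * fact (r - k) * (r choose k)) = real (fact r)" by simp
      then show ?thesis by (simp only: of_nat_mult of_nat_fact mult_ac)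
    qed
    have f: "(fact (k+1) :: real) = real (k+1) * fact k" by simp
    have "(-1) ^ k * of_nat (r choose k) * (bernoulli (r - k) * bernoulli (k + 1) / of_nat (k + 1))
        = (-1) ^ k * (real (r choose k) * fact (r-k) * fact k) * (B $ (r-k) * B $ (k+1))"
      unfolding bern f by (simp add: mult_ac)
    also have "\<dots> = fact r * (B $ (r-k) * ((-1)^k * B $ (k+1)))"
      unfolding ch by (simp add: mult_ac)
    finally
    show "fact r * (B $ (r-k) * ((-1)^k * B $ (k+1))) =
      (-1) ^ k * of_nat (r choose k) * (bernoulli (r - k) * bernoulli (k + 1) / of_nat (k + 1))"
      by simp
  qed simp
  finally show ?thesis .
qed

end
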